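(* Let $s\in\mathbb N$, $2\le q\le s$, let $c\in\mathbb R^s$ be a node vector with distinct entries, $C:=\mathrm{diag}(c_1,\dots,c_s)$, and let $A,B\in\mathbb R^{s\times s}$ and a diagonal matrix $K=\mathrm{diag}(\kappa_{11},\dots,\kappa_{ss})$ satisfy $AV_s=BV_s\mathcal P_s^{-1}+KV_s\tilde E_s$, so that $$\mathcal Q_{q,s}:=V_q^{\mathsf T}BV_s\mathcal P_s^{-1}=V_q^{\mathsf T}(AV_s-KV_s\tilde E_s).$$ (a) $\mathcal Q_{q,s}$ has Hankel form if and only if $V_{q-1}^{\mathsf T}(AC-CA-K)V_{s-1}=0$. (b) If $q=3$, $s=4$, $A$ is lower triangular and $\mathcal Q_{3,4}$ has Hankel form, then $\kappa_{33}=e_3^{\mathsf T}Ke_3=0$.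
   Context: $V_k:=(\mathbb 1,c,c^2,\dots,c^{k-1})\in\mathbb R^{s\times k}$ (componentwise powers), $\mathcal P_k:=\big(\binom{j-1}{i-1}\big)_{i,j=1}^k$, $\tilde E_k:=(i\,\delta_{i+1,j})_{i,j=1}^k$, $e_3$ the third cardinal basis vector. A matrix $X=(x_{ij})$ has Hankel form if $x_{ij}$ depends only on $i+j$. *)

theory Defs
  imports Complex_Main "Jordan_Normal_Form.Matrix"
begin

(* All indices are 0-based: row/column i here corresponds to i+1 in the paper. *)

definition vander :: "real vec \<Rightarrow> nat \<Rightarrow> real mat" where
  "vander c k = mat (dim_vec c) k (\<lambda>(i,j). (c $ i) ^ j)"

definition pascal :: "nat \<Rightarrow> real mat" where
  "pascal k = mat k k (\<lambda>(i,j). real (j choose i))"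

definition shiftE :: "nat \<Rightarrow> real mat" where
  "shiftE k = mat k k (\<lambda>(i,j). if j = i + 1 then real (i + 1) else 0)"

definition mat_inv :: "real mat \<Rightarrow> real mat" where
  "mat_inv M = (SOME N. N \<in> carrier_mat (dim_row M) (dim_row M) \<and>
                        N * M = 1\<^sub>m (dim_row M) \<and> M * N = 1\<^sub>m (dim_row M))"

definition hankel :: "'a mat \<Rightarrow> bool" where
  "hankel X \<longleftrightarrow> (\<forall>i j i' j'. i < dim_row X \<longrightarrow> j < dim_col X \<longrightarrow>
      i' < dim_row X \<longrightarrow> j' < dim_col X \<longrightarrow> i + j = i' + j' \<longrightarrow> X $$ (i,j) = X $$ (i',j'))"

definition lower_triangular :: "'a::zero mat \<Rightarrow> bool" where
  "lower_triangular A \<longleftrightarrow> (\<forall>i < dim_row A. \<forall>j < dim_col A. i < j \<longrightarrow> A $$ (i,j) = 0)"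

end

theory Submission
  imports Defs "Jordan_Normal_Form.Determinant"
begin


lemma pascal_inv_carrier: "mat_inv (pascal s) \<in> carrier_mat s s"
proof -
  have P: "pascal s \<in> carrier_mat s s" by (simp add: pascal_def)
  have ut: "upper_triangular (pascal s)"
    by (auto simp: upper_triangular_def pascal_def)
  have "det (pascal s) = prod_list (diag_mat (pascal s))"
    using det_upper_triangular[OF ut P] .
  also have "\<dots> = 1" unfolding prod_list_diag_prod by (simp add: pascal_def)
  finally have "det (pascal s) \<noteq> 0" by simp
  from det_non_zero_imp_unit[OF P this, of undefined]
  obtain N where "N \<in> carrier_mat s s" "N * pascal s = 1\<^sub>m s" "pascal s * N = 1\<^sub>m s"
    by (auto simp: Units_def ring_mat_def)
  then have ex: "\<exists>N. N \<in> carrier_mat (dim_row (pascal s)) (dim_row (pascal s)) \<and>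
                        N * pascal s = 1\<^sub>m (dim_row (pascal s)) \<and> pascal s * N = 1\<^sub>m (dim_row (pascal s))"
    using P by auto
  show ?thesis using someI_ex[OF ex] P unfolding mat_inv_def by auto
qed



lemma hankel_adj:
  "hankel X \<longleftrightarrow> (\<forall>i j. i + 1 < dim_row X \<longrightarrow> j + 1 < dim_col X \<longrightarrow> X $$ (i, j+1) = X $$ (i+1, j))"
proof
  assume "hankel X" then show "\<forall>i j. i + 1 < dim_row X \<longrightarrow> j + 1 < dim_col X \<longrightarrow> X $$ (i, j+1) = X $$ (i+1, j)"
    unfolding hankel_def by auto
next
  assume adj: "\<forall>i j. i + 1 < dim_row X \<longrightarrow> j + 1 < dim_col X \<longrightarrow> X $$ (i, j+1) = X $$ (i+1, j)"
  have step: "\<And>i j d. i + d < dim_row X \<Longrightarrow> j < dim_col X \<Longrightarrow> d \<le> j \<Longrightarrow> X $$ (i,j) = X $$ (i+d, j-d)"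
  proof -
    fix i j d show "i + d < dim_row X \<Longrightarrow> j < dim_col X \<Longrightarrow> d \<le> j \<Longrightarrow> X $$ (i,j) = X $$ (i+d, j-d)"
    proof (induction d)
      case 0 then show ?case by simp
    next
      case (Suc d)
      have "X $$ (i,j) = X $$ (i+d, j-d)" using Suc by auto
      also have "\<dots> = X $$ (i + d + 1, (j - Suc d))"
        using adj[rule_format, of "i+d" "j - Suc d"] Suc.prems
        by (metis Suc_diff_Suc Suc_eq_plus1 Suc_le_eq add_Suc_right le_less_trans diff_le_self Suc_lessD)
      finally show ?case by simp
    qed
  qed
  show "hankel X" unfolding hankel_def
  proof (intro allI impI)
    fix i j i' j'
    assume h: "i < dim_row X" "j < dim_col X" "i' < dim_row X" "j' < dim_col X" "i + j = i' + j'"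
    show "X $$ (i, j) = X $$ (i', j')"
    proof (cases "i \<le> i'")
      case True
      then have "i'-i \<le> j" "i + (i'-i) = i'" "j - (i'-i) = j'" using h(5) by arith+
      then show ?thesis using step[of i "i'-i" j] h by auto
    next
      case False
      then have "i-i' \<le> j'" "i' + (i-i') = i" "j' - (i-i') = j" using h(5) by arith+
      then show ?thesis using step[of i' "i-i'" j'] h by auto
    qed
  qed
qed

lemma mult_entry: "X \<in> carrier_mat n m \<Longrightarrow> Y \<in> carrier_mat m p \<Longrightarrow> i < n \<Longrightarrow> j < p \<Longrightarrow>
  (X * Y) $$ (i,j) = (\<Sum>k<m. X $$ (i,k) * Y $$ (k,j))"
  by (simp add: scalar_prod_def atLeast0LessThan)

lemma vander_carrier[simp]: "vander c k \<in> carrier_mat (dim_vec c) k"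
  by (simp add: vander_def)
lemma vander_idx[simp]: "i < dim_vec c \<Longrightarrow> j < k \<Longrightarrow> vander c k $$ (i,j) = c $ i ^ j"
  by (simp add: vander_def)
lemma shiftE_carrier[simp]: "shiftE k \<in> carrier_mat k k"
  by (simp add: shiftE_def)
lemma shiftE_idx[simp]: "i < k \<Longrightarrow> j < k \<Longrightarrow> shiftE k $$ (i,j) = (if j = i + 1 then real (i + 1) else 0)"
  by (simp add: shiftE_def)

lemma part_b:
  fixes a K :: "nat \<Rightarrow> nat \<Rightarrow> real" and x :: "nat \<Rightarrow> real"
  assumes low: "\<And>k m. k < m \<Longrightarrow> m < 4 \<Longrightarrow> a k m = 0"
    and diag: "\<And>k m. k < 4 \<Longrightarrow> m < 4 \<Longrightarrow> k \<noteq> m \<Longrightarrow> K k m = 0"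
    and d: "x 2 \<noteq> x 3" "x 2 \<noteq> x 0" "x 2 \<noteq> x 1"
    and eq: "\<And>i j. i < 2 \<Longrightarrow> j < 3 \<Longrightarrow>
       (\<Sum>k<4. x k ^ i * (\<Sum>m<4. (a k m * x m - x k * a k m - K k m) * x m ^ j)) = 0"
  shows "K 2 2 = 0"
proof -
  have e: "\<And>i j. i < 2 \<Longrightarrow> j < 3 \<Longrightarrow>
     x 0 ^ i * ((- K 0 0) * x 0 ^ j)
   + x 1 ^ i * ((a 1 0 * x 0 - x 1 * a 1 0) * x 0 ^ j + (- K 1 1) * x 1 ^ j)
   + x 2 ^ i * ((a 2 0 * x 0 - x 2 * a 2 0) * x 0 ^ j + (a 2 1 * x 1 - x 2 * a 2 1) * x 1 ^ j + (- K 2 2) * x 2 ^ j)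
   + x 3 ^ i * ((a 3 0 * x 0 - x 3 * a 3 0) * x 0 ^ j + (a 3 1 * x 1 - x 3 * a 3 1) * x 1 ^ j
        + (a 3 2 * x 2 - x 3 * a 3 2) * x 2 ^ j + (- K 3 3) * x 3 ^ j) = 0"
    using eq by (simp add: numeral_eq_Suc low diag)
  define F where "F i j = x 0 ^ i * ((- K 0 0) * x 0 ^ j)
   + x 1 ^ i * ((a 1 0 * x 0 - x 1 * a 1 0) * x 0 ^ j + (- K 1 1) * x 1 ^ j)
   + x 2 ^ i * ((a 2 0 * x 0 - x 2 * a 2 0) * x 0 ^ j + (a 2 1 * x 1 - x 2 * a 2 1) * x 1 ^ j + (- K 2 2) * x 2 ^ j)
   + x 3 ^ i * ((a 3 0 * x 0 - x 3 * a 3 0) * x 0 ^ j + (a 3 1 * x 1 - x 3 * a 3 1) * x 1 ^ j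
        + (a 3 2 * x 2 - x 3 * a 3 2) * x 2 ^ j + (- K 3 3) * x 3 ^ j)" for i j :: nat
  have Fz: "\<And>i j. i < 2 \<Longrightarrow> j < 3 \<Longrightarrow> F i j = 0" using e unfolding F_def by blast
  have comb: "(x 2 - x 3) * (x 2 - x 0) * (x 2 - x 1) * (- K 2 2) =
     F 1 2 - (x 0 + x 1) * F 1 1 + x 0 * x 1 * F 1 0 - x 3 * (F 0 2 - (x 0 + x 1) * F 0 1 + x 0 * x 1 * F 0 0)"
    unfolding F_def by (simp add: power2_eq_square algebra_simps)
  have "(x 2 - x 3) * (x 2 - x 0) * (x 2 - x 1) * (- K 2 2) = 0"
    unfolding comb by (simp add: Fz)
  then show ?thesis using d by simp
qed


lemma delta_sum:
  fixes s k :: nat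
  assumes "\<And>m. m < s \<Longrightarrow> m \<noteq> k \<Longrightarrow> K m = (0::real)" "k < s"
  shows "(\<Sum>m<s. K m * f m) = K k * f k"
proof -
  have "(\<Sum>m<s. K m * f m) = (\<Sum>m<s. if m = k then K k * f k else 0)"
    by (rule sum.cong) (auto simp: assms)
  also have "\<dots> = K k * f k" proof -
    have "\<And>c::real. (\<Sum>m<s. if m = k then c else 0) = c" using assms(2) by simp
    then show ?thesis .
  qed
  finally show ?thesis .
qed

lemma ident:
  fixes a K :: "nat \<Rightarrow> nat \<Rightarrow> real" and x :: "nat \<Rightarrow> real"
  assumes diag: "\<And>k m. k < s \<Longrightarrow> m < s \<Longrightarrow> k \<noteq> m \<Longrightarrow> K k m = 0"
  shows "(\<Sum>k<s. x k ^ i * ((\<Sum>m<s. a k m * x m ^ (j+1)) - (if j + 1 = 0 then 0 else real (j+1) * K k k * x k ^ (j + 1 - 1))))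
       - (\<Sum>k<s. x k ^ (i+1) * ((\<Sum>m<s. a k m * x m ^ j) - (if j = 0 then 0 else real j * K k k * x k ^ (j - 1))))
       = (\<Sum>k<s. x k ^ i * (\<Sum>m<s. (a k m * x m - x k * a k m - K k m) * x m ^ j))"
proof -
  have per: "x k ^ i * ((\<Sum>m<s. a k m * x m ^ (j+1)) - (if j + 1 = 0 then 0 else real (j+1) * K k k * x k ^ (j + 1 - 1)))
       - x k ^ (i+1) * ((\<Sum>m<s. a k m * x m ^ j) - (if j = 0 then 0 else real j * K k k * x k ^ (j - 1)))
       = x k ^ i * (\<Sum>m<s. (a k m * x m - x k * a k m - K k m) * x m ^ j)" if k: "k < s" for k
  proof -
    have s1: "(\<Sum>m<s. K k m * x m ^ j) = K k k * x k ^ j"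
      by (rule delta_sum) (use diag k in auto)
    have s2: "(\<Sum>m<s. (a k m * x m - x k * a k m - K k m) * x m ^ j)
        = (\<Sum>m<s. a k m * x m ^ (j+1)) - x k * (\<Sum>m<s. a k m * x m ^ j) - (\<Sum>m<s. K k m * x m ^ j)"
      by (simp add: sum_subtractf sum_distrib_left sum.distrib algebra_simps)
    have s3: "x k ^ (i+1) * (if j = 0 then 0 else real j * K k k * x k ^ (j - 1)) = real j * K k k * x k ^ i * x k ^ j"
      by (cases j) (auto simp: algebra_simps)
    show ?thesis unfolding s2 s1 using s3 by (simp add: algebra_simps)
  qed
  show ?thesis
    by (simp only: sum_subtractf[symmetric]) (rule sum.cong, simp, rule per, simp)
qed



theorem theorem6p1:
  fixes s q :: nat and c :: "real vec" and A B K :: "real mat"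
  assumes "2 \<le> q" and "q \<le> s"
    and "dim_vec c = s"
    and "\<forall>i<s. \<forall>j<s. i \<noteq> j \<longrightarrow> c $ i \<noteq> c $ j"
    and "A \<in> carrier_mat s s" and "B \<in> carrier_mat s s" and "K \<in> carrier_mat s s"
    and "diagonal_mat K"
    and "A * vander c s = B * vander c s * mat_inv (pascal s) + K * vander c s * shiftE s"
  shows "(hankel (transpose_mat (vander c q) * B * vander c s * mat_inv (pascal s)) \<longleftrightarrow>
            transpose_mat (vander c (q - 1)) * (A * mat_diag s (\<lambda>i. c $ i) - mat_diag s (\<lambda>i. c $ i) * A - K)
              * vander c (s - 1) = 0\<^sub>m (q - 1) (s - 1))
         \<and> (q = 3 \<and> s = 4 \<and> lower_triangular A \<and>
            hankel (transpose_mat (vander c q) * B * vander c s * mat_inv (pascal s))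
            \<longrightarrow> K $$ (2,2) = 0)"
proof -
  note dc = assms(3)
  define V where "V = vander c s"
  define Pi where "Pi = mat_inv (pascal s)"
  define E where "E = shiftE s"
  define Cd where "Cd = mat_diag s (\<lambda>i. c $ i)"
  define Vq where "Vq = vander c q"
  define Q where "Q = transpose_mat Vq * B * V * Pi"
  define Vq1 where "Vq1 = vander c (q - 1)"
  define V1 where "V1 = vander c (s - 1)"
  define M where "M = A * Cd - Cd * A - K"
  define N where "N = transpose_mat Vq1 * M * V1"
  have V: "V \<in> carrier_mat s s" unfolding V_def using dc vander_carrier by metis
  have Pi: "Pi \<in> carrier_mat s s" unfolding Pi_def by (rule pascal_inv_carrier)
  have E: "E \<in> carrier_mat s s" unfolding E_def by simp
  have Cd: "Cd \<in> carrier_mat s s" unfolding Cd_def by simp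
  have Vq: "transpose_mat Vq \<in> carrier_mat q s" unfolding Vq_def using dc vander_carrier[of c q] by simp
  have Vq1: "transpose_mat Vq1 \<in> carrier_mat (q-1) s" unfolding Vq1_def using dc vander_carrier[of c "q-1"] by simp
  have V1: "V1 \<in> carrier_mat s (s-1)" unfolding V1_def using dc vander_carrier by metis
  have A: "A \<in> carrier_mat s s" and B: "B \<in> carrier_mat s s" and K: "K \<in> carrier_mat s s"
    using assms by auto
  have M: "M \<in> carrier_mat s s" unfolding M_def using A Cd K by auto
  have Kd: "\<And>k m. k < s \<Longrightarrow> m < s \<Longrightarrow> k \<noteq> m \<Longrightarrow> K $$ (k,m) = 0"
    using assms(8) K unfolding diagonal_mat_def by auto
  have hyp: "A * V = B * V * Pi + K * V * E" using assms(9) unfolding V_def Pi_def E_def .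
  have BVP: "B * V * Pi = A * V - K * V * E"
  proof (rule eq_matI)
    fix i j assume "i < dim_row (A * V - K * V * E)" "j < dim_col (A * V - K * V * E)"
    then have ij: "i < s" "j < s" using A V K E by auto
    have "(A * V) $$ (i,j) = (B * V * Pi) $$ (i,j) + (K * V * E) $$ (i,j)"
      using hyp ij B V Pi K E by simp
    then show "(B * V * Pi) $$ (i, j) = (A * V - K * V * E) $$ (i, j)" using ij K V E by simp
  qed (use A V K E B Pi in auto)
  have Qeq: "Q = transpose_mat Vq * (A * V - K * V * E)"
  proof -
    have BV: "B * V \<in> carrier_mat s s" using B V by simp
    have "Q = transpose_mat Vq * (B * V) * Pi" unfolding Q_def using assoc_mult_mat[OF Vq B V] by simp
    also have "\<dots> = transpose_mat Vq * (B * V * Pi)" using assoc_mult_mat[OF Vq BV Pi] .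
    finally show ?thesis unfolding BVP .
  qed
  have KV: "(K * V) $$ (k,l) = K $$ (k,k) * c $ k ^ l" if "k < s" "l < s" for k l
  proof -
    have "(K * V) $$ (k,l) = (\<Sum>m<s. K $$ (k,m) * V $$ (m,l))"
      using mult_entry[OF K V that] .
    also have "\<dots> = K $$ (k,k) * V $$ (k,l)"
      by (rule delta_sum) (use Kd that in auto)
    finally show ?thesis using that dc by (simp add: V_def)
  qed
  have KVE: "(K * V * E) $$ (k,j) = (if j = 0 then 0 else real j * K $$ (k,k) * c $ k ^ (j - 1))"
    if "k < s" "j < s" for k j
  proof -
    have "(K * V * E) $$ (k,j) = (\<Sum>l<s. (K * V) $$ (k,l) * E $$ (l,j))"
      using mult_entry[OF _ E that] K V by auto
    also have "\<dots> = (\<Sum>l<s. K $$ (k,k) * c $ k ^ l * (if j = l + 1 then real (l + 1) else 0))"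
      by (rule sum.cong) (use that KV in \<open>auto simp: E_def\<close>)
    also have "\<dots> = (if j = 0 then 0 else real j * K $$ (k,k) * c $ k ^ (j - 1))"
    proof (cases j)
      case 0 then show ?thesis by simp
    next
      case (Suc j')
      have "(\<Sum>l<s. K $$ (k,k) * c $ k ^ l * (if j = l + 1 then real (l + 1) else 0))
          = (\<Sum>l<s. if l = j' then K $$ (k,k) * c $ k ^ j' * real (j' + 1) else 0)"
        by (rule sum.cong) (auto simp: Suc)
      also have "\<dots> = K $$ (k,k) * c $ k ^ j' * real (j' + 1)" using Suc that by simp
      finally show ?thesis using Suc by simp
    qed
    finally show ?thesis .
  qed
  have Qent: "Q $$ (i,j) = (\<Sum>k<s. c $ k ^ i * ((\<Sum>m<s. A $$ (k,m) * c $ m ^ j)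
      - (if j = 0 then 0 else real j * K $$ (k,k) * c $ k ^ (j - 1))))" if "i < q" "j < s" for i j
  proof -
    have "Q $$ (i,j) = (\<Sum>k<s. transpose_mat Vq $$ (i,k) * (A * V - K * V * E) $$ (k,j))"
    proof -
      have W: "A * V - K * V * E \<in> carrier_mat s s" using A V K E by auto
      show ?thesis unfolding Qeq using mult_entry[OF Vq W that] .
    qed
    also have "\<dots> = (\<Sum>k<s. c $ k ^ i * ((\<Sum>m<s. A $$ (k,m) * c $ m ^ j)
      - (if j = 0 then 0 else real j * K $$ (k,k) * c $ k ^ (j - 1))))"
    proof (rule sum.cong)
      fix k assume k: "k \<in> {..<s}"
      have "(A * V) $$ (k,j) = (\<Sum>m<s. A $$ (k,m) * V $$ (m,j))"
        using mult_entry[OF A V] k that by auto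
      also have "\<dots> = (\<Sum>m<s. A $$ (k,m) * c $ m ^ j)"
        by (rule sum.cong) (use dc that in \<open>auto simp: V_def\<close>)
      finally have AV: "(A * V) $$ (k,j) = (\<Sum>m<s. A $$ (k,m) * c $ m ^ j)" .
      show "transpose_mat Vq $$ (i,k) * (A * V - K * V * E) $$ (k,j) = c $ k ^ i * ((\<Sum>m<s. A $$ (k,m) * c $ m ^ j)
      - (if j = 0 then 0 else real j * K $$ (k,k) * c $ k ^ (j - 1)))"
      proof -
        have T: "transpose_mat Vq $$ (i,k) = c $ k ^ i"
          using k that dc unfolding Vq_def by (simp add: vander_def)
        have W: "(A * V - K * V * E) $$ (k,j) = (A * V) $$ (k,j) - (K * V * E) $$ (k,j)"
          using k that K V E by simp
        show ?thesis using k that by (simp only: T W AV KVE lessThan_iff)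
      qed
    qed simp
    finally show ?thesis .
  qed
  have Ment: "M $$ (k,m) = A $$ (k,m) * c $ m - c $ k * A $$ (k,m) - K $$ (k,m)" if "k < s" "m < s" for k m
    unfolding M_def Cd_def using that A K
    by (simp add: mat_diag_mult_left[OF A] mat_diag_mult_right[OF A])
  have Nent: "N $$ (i,j) = (\<Sum>k<s. c $ k ^ i * (\<Sum>m<s. (A $$ (k,m) * c $ m - c $ k * A $$ (k,m) - K $$ (k,m)) * c $ m ^ j))"
    if "i < q - 1" "j < s - 1" for i j
  proof -
    have "N $$ (i,j) = (\<Sum>m<s. (transpose_mat Vq1 * M) $$ (i,m) * V1 $$ (m,j))"
      unfolding N_def using mult_entry[OF _ V1 that] Vq1 M by auto
    also have "\<dots> = (\<Sum>m<s. (\<Sum>k<s. c $ k ^ i * M $$ (k,m)) * c $ m ^ j)"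
    proof (rule sum.cong)
      fix m assume m: "m \<in> {..<s}"
      have "(transpose_mat Vq1 * M) $$ (i,m) = (\<Sum>k<s. transpose_mat Vq1 $$ (i,k) * M $$ (k,m))"
        using mult_entry[OF Vq1 M] m that by auto
      also have "\<dots> = (\<Sum>k<s. c $ k ^ i * M $$ (k,m))"
        by (rule sum.cong) (use dc that assms(2) in \<open>auto simp: Vq1_def vander_def\<close>)
      finally show "(transpose_mat Vq1 * M) $$ (i,m) * V1 $$ (m,j) = (\<Sum>k<s. c $ k ^ i * M $$ (k,m)) * c $ m ^ j"
        using m that dc by (simp add: V1_def)
    qed simp
    also have "\<dots> = (\<Sum>k<s. \<Sum>m<s. c $ k ^ i * (M $$ (k,m) * c $ m ^ j))"
    proof -
      have "(\<Sum>m<s. (\<Sum>k<s. c $ k ^ i * M $$ (k,m)) * c $ m ^ j) = (\<Sum>m<s. \<Sum>k<s. c $ k ^ i * (M $$ (k,m) * c $ m ^ j))"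
        by (simp add: sum_distrib_right mult.assoc)
      also have "\<dots> = (\<Sum>k<s. \<Sum>m<s. c $ k ^ i * (M $$ (k,m) * c $ m ^ j))"
        by (rule sum.swap)
      finally show ?thesis .
    qed
    also have "\<dots> = (\<Sum>k<s. c $ k ^ i * (\<Sum>m<s. (A $$ (k,m) * c $ m - c $ k * A $$ (k,m) - K $$ (k,m)) * c $ m ^ j))"
      by (rule sum.cong) (auto simp: sum_distrib_left Ment)
    finally show ?thesis .
  qed
  have dQ: "dim_row Q = q" "dim_col Q = s" unfolding Q_def using Vq B V Pi by auto
  have dN: "N \<in> carrier_mat (q-1) (s-1)" unfolding N_def using Vq1 M V1 by auto
  have keyid: "Q $$ (i, j+1) - Q $$ (i+1, j) = N $$ (i,j)" if "i + 1 < q" "j + 1 < s" for i j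
    using Qent[of i "j+1"] Qent[of "i+1" j] Nent[of i j] that
      ident[of s "\<lambda>k m. K $$ (k,m)" "\<lambda>k. c $ k" i "\<lambda>k m. A $$ (k,m)" j] Kd
    by simp
  have partA: "hankel Q \<longleftrightarrow> N = 0\<^sub>m (q - 1) (s - 1)"
  proof -
    have "hankel Q \<longleftrightarrow> (\<forall>i j. i + 1 < q \<longrightarrow> j + 1 < s \<longrightarrow> Q $$ (i, j+1) = Q $$ (i+1, j))"
      unfolding hankel_adj dQ ..
    also have "\<dots> \<longleftrightarrow> (\<forall>i j. i < q - 1 \<longrightarrow> j < s - 1 \<longrightarrow> N $$ (i,j) = 0)"
    proof (intro iffI allI impI)
      fix i j assume H: "\<forall>i j. i + 1 < q \<longrightarrow> j + 1 < s \<longrightarrow> Q $$ (i, j+1) = Q $$ (i+1, j)"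
        and ij: "i < q - 1" "j < s - 1"
      then have ij': "i + 1 < q" "j + 1 < s" by auto
      have "Q $$ (i, j+1) = Q $$ (i+1, j)" using H ij' by blast
      then show "N $$ (i,j) = 0" using keyid[OF ij'] by simp
    next
      fix i j assume H: "\<forall>i j. i < q - 1 \<longrightarrow> j < s - 1 \<longrightarrow> N $$ (i,j) = 0"
        and ij': "i + 1 < q" "j + 1 < s"
      then have ij: "i < q - 1" "j < s - 1" by auto
      have "N $$ (i,j) = 0" using H ij by blast
      then show "Q $$ (i, j+1) = Q $$ (i+1, j)" using keyid[OF ij'] by simp
    qed
    also have "\<dots> \<longleftrightarrow> N = 0\<^sub>m (q - 1) (s - 1)"
      using dN by (auto intro!: eq_matI)
    finally show ?thesis .
  qed
  show ?thesis
  proof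
    show "hankel (transpose_mat (vander c q) * B * vander c s * mat_inv (pascal s)) \<longleftrightarrow>
            transpose_mat (vander c (q - 1)) * (A * mat_diag s (\<lambda>i. c $ i) - mat_diag s (\<lambda>i. c $ i) * A - K)
              * vander c (s - 1) = 0\<^sub>m (q - 1) (s - 1)"
      using partA unfolding Q_def N_def M_def Vq_def V_def Pi_def Vq1_def V1_def Cd_def .
  next
    show "q = 3 \<and> s = 4 \<and> lower_triangular A \<and>
            hankel (transpose_mat (vander c q) * B * vander c s * mat_inv (pascal s))
            \<longrightarrow> K $$ (2,2) = 0"
    proof
      assume h: "q = 3 \<and> s = 4 \<and> lower_triangular A \<and>
            hankel (transpose_mat (vander c q) * B * vander c s * mat_inv (pascal s))"
      then have q3: "q = 3" and s4: "s = 4" and lt: "lower_triangular A" and hQ: "hankel Q"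
        unfolding Q_def Vq_def V_def Pi_def by auto
      have N0: "N = 0\<^sub>m (q - 1) (s - 1)" using partA hQ by simp
      show "K $$ (2,2) = 0"
      proof (rule part_b[of "\<lambda>k m. A $$ (k,m)" "\<lambda>k m. K $$ (k,m)" "\<lambda>k. c $ k"])
        show "\<And>k m. k < m \<Longrightarrow> m < 4 \<Longrightarrow> A $$ (k, m) = 0"
          using lt A s4 unfolding lower_triangular_def by auto
        show "\<And>k m. k < 4 \<Longrightarrow> m < 4 \<Longrightarrow> k \<noteq> m \<Longrightarrow> K $$ (k, m) = 0"
          using Kd s4 by auto
        show "c $ 2 \<noteq> c $ 3" "c $ 2 \<noteq> c $ 0" "c $ 2 \<noteq> c $ 1" using assms(4) s4 by auto
        show "\<And>i j. i < 2 \<Longrightarrow> j < 3 \<Longrightarrow>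
          (\<Sum>k<4. c $ k ^ i * (\<Sum>m<4. (A $$ (k,m) * c $ m - c $ k * A $$ (k,m) - K $$ (k,m)) * c $ m ^ j)) = 0"
        proof -
          fix i j :: nat assume "i < 2" "j < 3"
          then show "(\<Sum>k<4. c $ k ^ i * (\<Sum>m<4. (A $$ (k,m) * c $ m - c $ k * A $$ (k,m) - K $$ (k,m)) * c $ m ^ j)) = 0"
            using Nent[of i j] N0 q3 s4 by simp
        qed
      qed
    qed
  qed
qed

end
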